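(* Let $N\ge1$ and $p\in(0,1)$. Then $$\min_{M\in\{1,\dots,N\}}\ \min_{C_{N,M}\in\{0,1\}^{N\times M}}\bigl(M+B_{M,C_{N,M},p}\bigr)\ \ge\ N\bar A_p,$$ where $\bar A_p:=\min_{\vec m\in\{0,1,\dots,N\}^N}A_p(\vec m)$ and $$A_p(\vec m):=\sum_{i=1}^N\frac{m_i}{i}+q\,0^{m_1}\exp\Bigl(-\sum_{i=2}^N m_i a^i_p\Bigr),\qquad a^i_p:=\bigl|\log\bigl(1-(1-p)^{i-1}\bigr)\bigr|.$$
   Context: $q:=1-p$, $\log$ is the natural logarithm, and $0^0=1$ (so $0^{m_1}=1$ if $m_1=0$ and $0$ otherwise). For an $N\times M$ binary matrix $C_{N,M}=(c_{i,a})$, $d_a:=\sum_{l=1}^N c_{l,a}$ and $B_{M,C_{N,M},p}:=q\sum_{i=1}^N\prod_{a=1}^M(1-q^{d_a-1})^{c_{i,a}}$. *)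

theory Defs
  imports Complex_Main "HOL-Library.FuncSet"
begin

definition colsum :: "nat \<Rightarrow> (nat \<Rightarrow> nat \<Rightarrow> nat) \<Rightarrow> nat \<Rightarrow> nat" where
  "colsum N c a = (\<Sum>l=1..N. c l a)"

definition Bfun :: "nat \<Rightarrow> nat \<Rightarrow> (nat \<Rightarrow> nat \<Rightarrow> nat) \<Rightarrow> real \<Rightarrow> real" where
  "Bfun N M c p = (1 - p) * (\<Sum>i=1..N. \<Prod>a=1..M. (1 - (1 - p) ^ (colsum N c a - 1)) ^ (c i a))"

definition a_coef :: "real \<Rightarrow> nat \<Rightarrow> real" where
  "a_coef p i = \<bar>ln (1 - (1 - p) ^ (i - 1))\<bar>"

definition Afun :: "nat \<Rightarrow> real \<Rightarrow> (nat \<Rightarrow> nat) \<Rightarrow> real" where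
  "Afun N p m = (\<Sum>i=1..N. real (m i) / real i)
      + (1 - p) * (0::real) ^ (m 1) * exp (- (\<Sum>i=2..N. real (m i) * a_coef p i))"

definition Abar :: "nat \<Rightarrow> real \<Rightarrow> real" where
  "Abar N p = Min (Afun N p ` ({1..N} \<rightarrow>\<^sub>E {0..N}))"

end

theory Submission
  imports Defs
begin

lemma f_facts:
  fixes p :: real assumes "0 < p" "p < 1" "2 \<le> i"
  shows "0 < 1 - (1-p)^(i-1)" "1 - (1-p)^(i-1) < 1"
proof -
  have "(1-p)^(i-1) < 1" using assms by (simp add: power_less_one_iff)
  moreover have "0 < (1-p)^(i-1)" using assms by simp
  ultimately show "0 < 1 - (1-p)^(i-1)" "1 - (1-p)^(i-1) < 1" by auto
qed

lemma row_lemma: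
  fixes N M :: nat and p :: real and c :: "nat \<Rightarrow> nat \<Rightarrow> nat"
  assumes N1: "N \<ge> 1" and p0: "0 < p" and p1: "p < 1"
    and MN: "M \<in> {1..N}"
    and c01: "\<forall>i\<in>{1..N}. \<forall>a\<in>{1..M}. c i a \<in> {0, 1}"
    and j: "j \<in> {1..N}"
  shows "Abar N p \<le> (\<Sum>a=1..M. real (c j a) / real (colsum N c a))
     + (1 - p) * (\<Prod>a=1..M. (1 - (1 - p) ^ (colsum N c a - 1)) ^ (c j a))"
proof -
  define d where "d = colsum N c"
  define S where "S = {a\<in>{1..M}. c j a = 1}"
  define f where "f = (\<lambda>i::nat. 1 - (1 - p) ^ (i - 1))"
  define m where "m = (\<lambda>i. if i \<in> {1..N} then card {a\<in>S. d a = i} else undefined)"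
  have finS: "finite S" unfolding S_def by simp
  have dle: "d a \<le> N" if "a \<in> {1..M}" for a
  proof -
    have "d a = (\<Sum>l=1..N. c l a)" unfolding d_def colsum_def by simp
    also have "\<dots> \<le> (\<Sum>l=1..N. 1)"
      by (rule sum_mono) (use c01 that in fastforce)
    finally show ?thesis by simp
  qed
  have dge: "1 \<le> d a" if "a \<in> S" for a
  proof -
    have "c j a \<le> (\<Sum>l=1..N. c l a)" by (rule member_le_sum) (use j in auto)
    thus ?thesis using that unfolding S_def d_def colsum_def by auto
  qed
  have dimg: "d ` S \<subseteq> {1..N}" using dle dge unfolding S_def by fastforce
  have mPi: "m \<in> {1..N} \<rightarrow>\<^sub>E {0..N}"
  proof -
    have "card {a\<in>S. d a = i} \<le> N" for i
    proof -
      have "card {a\<in>S. d a = i} \<le> card {1..M}"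
        by (rule card_mono) (auto simp: S_def)
      thus ?thesis using MN by simp
    qed
    thus ?thesis unfolding m_def by auto
  qed
  have Amin: "Abar N p \<le> Afun N p m"
    unfolding Abar_def
    by (rule Min_le) (use mPi in \<open>auto intro: finite_PiE\<close>)
  have c01j: "c j a = 0 \<or> c j a = 1" if "a \<in> {1..M}" for a using c01 j that by auto
  have r1: "(\<Sum>a=1..M. real (c j a) / real (d a)) = (\<Sum>a\<in>S. 1 / real (d a))"
    by (rule sum.mono_neutral_cong_right) (use c01j in \<open>force simp: S_def\<close>)+
  have r2: "(\<Sum>a\<in>S. 1 / real (d a)) = (\<Sum>i=1..N. \<Sum>a\<in>{x\<in>S. d x = i}. 1 / real (d a))"
    by (rule sum.group[symmetric]) (use finS dimg in auto)
  have r3: "(\<Sum>i=1..N. \<Sum>a\<in>{x\<in>S. d x = i}. 1 / real (d a)) = (\<Sum>i=1..N. real (m i) / real i)"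
    by (rule sum.cong) (auto simp: m_def)
  have p1': "(\<Prod>a=1..M. f (d a) ^ (c j a)) = (\<Prod>a\<in>S. f (d a))"
    by (rule prod.mono_neutral_cong_right) (use c01j in \<open>force simp: S_def\<close>)+
  have p2: "(\<Prod>a\<in>S. f (d a)) = (\<Prod>i=1..N. \<Prod>a\<in>{x\<in>S. d x = i}. f (d a))"
    by (rule prod.group[symmetric]) (use finS dimg in auto)
  have p3: "(\<Prod>i=1..N. \<Prod>a\<in>{x\<in>S. d x = i}. f (d a)) = (\<Prod>i=1..N. f i ^ m i)"
    by (rule prod.cong) (auto simp: m_def)
  have p4: "(\<Prod>i=1..N. f i ^ m i) = f 1 ^ m 1 * (\<Prod>i=2..N. f i ^ m i)"
    using N1 by (simp add: prod.atLeast_Suc_atMost numeral_2_eq_2)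
  have p5: "(\<Prod>i=2..N. f i ^ m i) = exp (- (\<Sum>i=2..N. real (m i) * a_coef p i))"
  proof -
    have "(\<Prod>i=2..N. f i ^ m i) = (\<Prod>i=2..N. exp (- (real (m i) * a_coef p i)))"
    proof (rule prod.cong)
      fix i assume "i \<in> {2..N}"
      hence i2: "2 \<le> i" by simp
      have fp: "0 < f i" "f i < 1" using f_facts[OF p0 p1 i2] unfolding f_def by auto
      have "ln (f i) < 0" using fp by simp
      hence "a_coef p i = - ln (f i)" unfolding a_coef_def f_def by simp
      hence "exp (- (real (m i) * a_coef p i)) = exp (ln (f i)) ^ m i"
        by (simp add: exp_of_nat_mult[symmetric])
      thus "f i ^ m i = exp (- (real (m i) * a_coef p i))" using fp by simp
    qed simp
    also have "\<dots> = exp (- (\<Sum>i=2..N. real (m i) * a_coef p i))"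
      by (simp add: exp_sum[symmetric] sum_negf)
    finally show ?thesis .
  qed
  have f1: "f 1 = 0" unfolding f_def by simp
  have "Afun N p m = (\<Sum>a=1..M. real (c j a) / real (d a))
     + (1 - p) * (\<Prod>a=1..M. f (d a) ^ (c j a))"
    unfolding Afun_def using r1 r2 r3 p1' p2 p3 p4 p5 f1 by simp
  thus ?thesis using Amin unfolding d_def f_def by simp
qed

theorem lemma2:
  fixes N M :: nat and p :: real and c :: "nat \<Rightarrow> nat \<Rightarrow> nat"
  assumes "N \<ge> 1" and "0 < p" and "p < 1"
    and "M \<in> {1..N}"
    and "\<forall>i\<in>{1..N}. \<forall>a\<in>{1..M}. c i a \<in> {0, 1}"
  shows "real M + Bfun N M c p \<ge> real N * Abar N p"
proof -
  define d where "d = colsum N c"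
  have "real N * Abar N p = (\<Sum>j=1..N. Abar N p)" by simp
  also have "\<dots> \<le> (\<Sum>j=1..N. (\<Sum>a=1..M. real (c j a) / real (d a))
     + (1 - p) * (\<Prod>a=1..M. (1 - (1 - p) ^ (d a - 1)) ^ (c j a)))"
    by (rule sum_mono) (use row_lemma[OF assms] in \<open>auto simp: d_def\<close>)
  also have "\<dots> = (\<Sum>j=1..N. \<Sum>a=1..M. real (c j a) / real (d a)) + Bfun N M c p"
    by (simp add: sum.distrib Bfun_def sum_distrib_left d_def)
  also have "(\<Sum>j=1..N. \<Sum>a=1..M. real (c j a) / real (d a)) \<le> real M"
  proof -
    have "(\<Sum>j=1..N. \<Sum>a=1..M. real (c j a) / real (d a))
        = (\<Sum>a=1..M. (\<Sum>j=1..N. real (c j a)) / real (d a))"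
      by (subst sum.swap) (simp add: sum_divide_distrib)
    also have "\<dots> = (\<Sum>a=1..M. real (d a) / real (d a))"
      unfolding d_def colsum_def by simp
    also have "\<dots> \<le> (\<Sum>a=1..M. 1)" by (rule sum_mono) simp
    finally show ?thesis by simp
  qed
  finally show ?thesis by simp
qed

end
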